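(* Let $f:S^1\to S^1$ be a Denjoy homeomorphism as described in the context, $\Delta$ the partition of $S^1$ into $f$-orbits, $Y=S^1/\Delta$ with the quotient topology, and $p:S^1\to Y$ the projection. Then $p$ has property (CONT) but does not have property (COMP).
   Context: A Denjoy homeomorphism here is an orientation preserving homeomorphism $f:S^1\to S^1$ with irrational rotation number such that (i) there is a nowhere dense Cantor set $\Gamma\subset S^1$ with $f(\Gamma)=\Gamma$ and the orbit $\{f^k(x):k\in\mathbb{Z}\}$ of every $x\in\Gamma$ is dense in $\Gamma$; (ii) there is an open arc $J_0\subset S^1$ such that $S^1\setminus\Gamma=\bigsqcup_{m\in\mathbb{Z}} f^m(J_0)$ (disjoint union). A $\Delta$-map is a continuous $h:S^1\to S^1$ mapping each element of $\Delta$ into some element of $\Delta$; $\mathrm{End}(S^1,\Delta)$ is the monoid of $\Delta$-maps, $\mathrm{End}(Y)=C(Y,Y)$, and $\psi(h)$ is the unique map with $p\circ h=\psi(h)\circ p$. Property (COMP): for every compact $L\subset Y$ there is a compact $K\subset S^1$ with $p(K)=L$. Property (CONT): $\psi:\mathrm{End}(S^1,\Delta)\to\mathrm{End}(Y)$ is continuous with respect to compact open topologies (generated by subbasic sets $\{g: g(K)\subset U\}$, $K$ compact, $U$ open). *)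

theory Defs
  imports "HOL-Analysis.Analysis"
begin

abbreviation S1 :: "complex set" where "S1 \<equiv> sphere 0 1"

abbreviation circ :: "complex topology" where "circ \<equiv> top_of_set S1"

definition circexp :: "real \<Rightarrow> complex" where
  "circexp t = cis (2 * pi * t)"

definition fpow :: "(complex \<Rightarrow> complex) \<Rightarrow> int \<Rightarrow> complex \<Rightarrow> complex" where
  "fpow f k = (if 0 \<le> k then f ^^ nat k else inv_into S1 f ^^ nat (- k))"

definition orient_pres_irrational_rot :: "(complex \<Rightarrow> complex) \<Rightarrow> bool" where
  "orient_pres_irrational_rot f \<longleftrightarrow>
     homeomorphic_map circ circ f \<and>
     (\<exists>F \<rho>. continuous_on UNIV F \<and> strict_mono F \<and> (\<forall>x. F (x + 1) = F x + 1) \<and>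
            (\<forall>x. f (circexp x) = circexp (F x)) \<and>
            (\<lambda>n. (F ^^ n) 0 / real n) \<longlonglongrightarrow> \<rho> \<and> \<rho> \<notin> \<rat>)"

definition cantor_set :: "complex set \<Rightarrow> bool" where
  "cantor_set C \<longleftrightarrow> compact C \<and> C \<noteq> {} \<and> (\<forall>x\<in>C. x islimpt C) \<and>
     (\<forall>x\<in>C. connected_component_set C x = {x})"

definition nowhere_dense_in_circle :: "complex set \<Rightarrow> bool" where
  "nowhere_dense_in_circle C \<longleftrightarrow> C \<subseteq> S1 \<and> circ interior_of (circ closure_of C) = {}"

definition open_arc :: "complex set \<Rightarrow> bool" where
  "open_arc J \<longleftrightarrow> (\<exists>a b. a < b \<and> b \<le> a + 1 \<and> J = circexp ` {a<..<b})"

definition orbit :: "(complex \<Rightarrow> complex) \<Rightarrow> complex \<Rightarrow> complex set" where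
  "orbit f x = {fpow f k x | k. True}"

definition denjoy :: "(complex \<Rightarrow> complex) \<Rightarrow> bool" where
  "denjoy f \<longleftrightarrow> orient_pres_irrational_rot f \<and>
     (\<exists>\<Gamma> J0. \<Gamma> \<subseteq> S1 \<and> cantor_set \<Gamma> \<and> nowhere_dense_in_circle \<Gamma> \<and> f ` \<Gamma> = \<Gamma> \<and>
        (\<forall>x\<in>\<Gamma>. \<Gamma> \<subseteq> closure (orbit f x)) \<and>
        open_arc J0 \<and>
        S1 - \<Gamma> = (\<Union>m. fpow f m ` J0) \<and>
        disjoint_family (\<lambda>m::int. fpow f m ` J0))"

definition orbits :: "(complex \<Rightarrow> complex) \<Rightarrow> complex set set" where
  "orbits f = orbit f ` S1"

definition quotient_top :: "'a topology \<Rightarrow> ('a \<Rightarrow> 'b) \<Rightarrow> 'b topology" where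
  "quotient_top X p = topology (\<lambda>U. U \<subseteq> p ` topspace X \<and> openin X {x \<in> topspace X. p x \<in> U})"

definition compact_open :: "'a topology \<Rightarrow> 'b topology \<Rightarrow> ('a \<Rightarrow> 'b) set \<Rightarrow> ('a \<Rightarrow> 'b) topology" where
  "compact_open X Y F = topology_generated_by
     {{g \<in> F. g ` K \<subseteq> U} | K U. compactin X K \<and> openin Y U}"

definition End_part :: "'a topology \<Rightarrow> 'a set set \<Rightarrow> ('a \<Rightarrow> 'a) set" where
  "End_part X D = {h. continuous_map X X h \<and> h \<in> extensional (topspace X) \<and>
                      (\<forall>A\<in>D. \<exists>B\<in>D. h ` A \<subseteq> B)}"

definition End_top :: "'b topology \<Rightarrow> ('b \<Rightarrow> 'b) set" where
  "End_top Y = {g. continuous_map Y Y g \<and> g \<in> extensional (topspace Y)}"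

definition psi :: "'a topology \<Rightarrow> 'b topology \<Rightarrow> ('a \<Rightarrow> 'b) \<Rightarrow> ('a \<Rightarrow> 'a) \<Rightarrow> ('b \<Rightarrow> 'b)" where
  "psi X Y p h = (THE g. g \<in> extensional (topspace Y) \<and>
                    (\<forall>x\<in>topspace X. p (h x) = g (p x)))"

definition has_COMP :: "'a topology \<Rightarrow> 'b topology \<Rightarrow> ('a \<Rightarrow> 'b) \<Rightarrow> bool" where
  "has_COMP X Y p \<longleftrightarrow> (\<forall>L. compactin Y L \<longrightarrow> (\<exists>K. compactin X K \<and> p ` K = L))"

definition has_CONT :: "'a topology \<Rightarrow> 'a set set \<Rightarrow> 'b topology \<Rightarrow> ('a \<Rightarrow> 'b) \<Rightarrow> bool" where
  "has_CONT X D Y p \<longleftrightarrow>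
     continuous_map (compact_open X X (End_part X D)) (compact_open Y Y (End_top Y)) (psi X Y p)"

end

theory Submission
  imports Defs
begin

locale denj =
  fixes f :: "complex \<Rightarrow> complex" and G :: "complex set" and a b :: real
  assumes hom: "homeomorphic_map circ circ f"
  and GS: "G \<subseteq> S1" and Gcpt: "compact G" and Gne: "G \<noteq> {}"
  and Gdense: "\<forall>x\<in>G. G \<subseteq> closure (orbit f x)"
  and ab: "a < b" "b \<le> a + 1"
  and gaps: "S1 - G = (\<Union>m. fpow f m ` circexp ` {a<..<b})"
  and disj: "disjoint_family (\<lambda>m::int. fpow f m ` circexp ` {a<..<b})"
begin

abbreviation "g \<equiv> inv_into S1 f"
abbreviation "J0 \<equiv> circexp ` {a<..<b}"
abbreviation "J m \<equiv> fpow f m ` J0"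
abbreviation "p \<equiv> orbit f"

lemma topS1[simp]: "topspace circ = S1" by simp

lemma f_S1: "x \<in> S1 \<Longrightarrow> f x \<in> S1"
  using homeomorphic_imp_surjective_map[OF hom] by auto

lemma finj: "inj_on f S1"
  using homeomorphic_imp_injective_map[OF hom] by auto

lemma fsurj: "f ` S1 = S1"
  using homeomorphic_imp_surjective_map[OF hom] by auto

lemma g_S1: "x \<in> S1 \<Longrightarrow> g x \<in> S1"
  by (metis fsurj inv_into_into)

lemma fg: "y \<in> S1 \<Longrightarrow> f (g y) = y"
  by (metis fsurj f_inv_into_f)

lemma gf: "x \<in> S1 \<Longrightarrow> g (f x) = x"
  by (meson finj inv_into_f_f)

lemma funpow_f_S1: "x \<in> S1 \<Longrightarrow> (f^^n) x \<in> S1"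
  using f_S1 by (induction n) auto

lemma funpow_g_S1: "x \<in> S1 \<Longrightarrow> (g^^n) x \<in> S1"
  using g_S1 by (induction n) auto

lemma fpow_S1: "x \<in> S1 \<Longrightarrow> fpow f k x \<in> S1"
  unfolding fpow_def using funpow_f_S1 funpow_g_S1 by presburger

lemma fpow_0[simp]: "fpow f 0 x = x"
  by (simp add: fpow_def)

lemma fpow_plus1: "x \<in> S1 \<Longrightarrow> fpow f (k+1) x = f (fpow f k x)"
proof (cases "0 \<le> k")
  case True
  then have "nat (k+1) = Suc (nat k)" by simp
  then show ?thesis using True by (simp add: fpow_def)
next
  case False
  assume x: "x \<in> S1"
  have e: "nat (-k) = Suc (nat (-(k+1)))" using False by simp
  have "f (fpow f k x) = f (g ((g^^(nat (-(k+1)))) x))"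
    using False by (simp add: fpow_def e)
  also have "\<dots> = (g^^(nat (-(k+1)))) x" using fg funpow_g_S1 x by blast
  also have "\<dots> = fpow f (k+1) x" using False by (simp add: fpow_def)
  finally show ?thesis by simp
qed

lemma fpow_minus1: "x \<in> S1 \<Longrightarrow> fpow f (k-1) x = g (fpow f k x)"
  using fpow_plus1[of x "k-1"] gf fpow_S1 by simp

lemma fpow_add: "x \<in> S1 \<Longrightarrow> fpow f m (fpow f n x) = fpow f (m+n) x"
proof (induction m rule: int_induct[where k=0])
  case base then show ?case by simp
next
  case (step1 i)
  then show ?case using fpow_plus1 fpow_S1
    by (metis add.commute add.left_commute)
next
  case (step2 i)
  then show ?case using fpow_minus1 fpow_S1 by (metis add_diff_eq diff_add_eq)
qed

lemma g_cont: "continuous_map circ circ g"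
proof -
  obtain h where h: "homeomorphic_maps circ circ f h"
    using hom homeomorphic_map_maps by blast
  then have "continuous_map circ circ h" by (simp add: homeomorphic_maps_def)
  moreover have "\<And>y. y \<in> S1 \<Longrightarrow> h y = g y"
    using h unfolding homeomorphic_maps_def by (metis topS1 fg g_S1)
  ultimately show ?thesis using continuous_map_eq by (metis topS1)
qed

lemma f_cont: "continuous_map circ circ f"
  using hom homeomorphic_imp_continuous_map by blast

lemma funpow_cont: "continuous_map X X h \<Longrightarrow> continuous_map X X (h^^n)"
  by (induction n) (auto intro: continuous_map_compose)

lemma fpow_cont: "continuous_map circ circ (fpow f k)"
proof -
  have "continuous_map circ circ (f^^nat k)" "continuous_map circ circ (g^^nat (-k))"
    using funpow_cont f_cont g_cont by blast+
  then show ?thesis unfolding fpow_def by (cases "0 \<le> k") simp_all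
qed

lemma fpow_homeo: "homeomorphic_map circ circ (fpow f k)"
proof -
  have "homeomorphic_maps circ circ (fpow f k) (fpow f (-k))"
    unfolding homeomorphic_maps_def using fpow_cont fpow_add by simp
  then show ?thesis using homeomorphic_map_maps by blast
qed

lemma fpow_open: "openin circ W \<Longrightarrow> openin circ (fpow f k ` W)"
  using fpow_homeo homeomorphic_map_openness openin_subset by (metis topS1)

lemma orbit_mem: "y \<in> orbit f x \<longleftrightarrow> (\<exists>k. y = fpow f k x)"
  by (auto simp: orbit_def)

lemma orbit_self: "x \<in> orbit f x"
  unfolding orbit_mem by (rule exI[of _ 0]) simp

lemma orbit_S1: "x \<in> S1 \<Longrightarrow> orbit f x \<subseteq> S1"
proof
  fix y assume "x \<in> S1" "y \<in> orbit f x"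
  then obtain k where "y = fpow f k x" unfolding orbit_mem by blast
  then show "y \<in> S1" using fpow_S1 \<open>x \<in> S1\<close> by simp
qed

lemma orbit_eq: assumes "x \<in> S1" "y \<in> orbit f x" shows "orbit f y = orbit f x"
proof -
  obtain k where k: "y = fpow f k x" using assms orbit_mem by blast
  show ?thesis
  proof
    show "orbit f y \<subseteq> orbit f x"
      using k fpow_add[OF assms(1)] orbit_mem by auto
    show "orbit f x \<subseteq> orbit f y"
    proof
      fix z assume "z \<in> orbit f x"
      then obtain m where "z = fpow f m x" using orbit_mem by blast
      then have "z = fpow f (m - k) y" using k fpow_add[OF assms(1)] by simp
      then show "z \<in> orbit f y" using orbit_mem by blast
    qed
  qed
qed

lemma orbit_eq_iff: "x \<in> S1 \<Longrightarrow> y \<in> S1 \<Longrightarrow> orbit f x = orbit f y \<longleftrightarrow> y \<in> orbit f x"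
  using orbit_eq[of x y] orbit_self[of y] by auto

lemma J_0: "J 0 = J0"
  by (simp add: fpow_def)

lemma J_sub: "J m \<subseteq> S1 - G"
  using gaps by blast

lemma J0_S1: "J0 \<subseteq> S1"
  using J_sub[of 0] J_0 by auto

lemma J0_ne: "J0 \<noteq> {}"
  using ab by auto

lemma J_S1: "J m \<subseteq> S1"
  using J_sub by blast

lemma J_shift: assumes "u \<in> J n" shows "fpow f k u \<in> J (k+n)"
proof -
  obtain v where v: "v \<in> J0" "u = fpow f n v" using assms by blast
  then have "fpow f k u = fpow f (k+n) v" using fpow_add J0_S1 by blast
  then show ?thesis using v by blast
qed

lemma J_disj: "m \<noteq> n \<Longrightarrow> J m \<inter> J n = {}"
  using disj unfolding disjoint_family_on_def by blast

lemma J_eq: "u \<in> J m \<Longrightarrow> u \<in> J n \<Longrightarrow> m = n"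
  using J_disj by blast

lemma at_most_one:
  assumes s: "s \<in> S1" and u: "u1 \<in> orbit f s" "u2 \<in> orbit f s" "u1 \<in> J j" "u2 \<in> J j"
  shows "u1 = u2"
proof -
  obtain k1 k2 where k: "u1 = fpow f k1 s" "u2 = fpow f k2 s" using u orbit_mem by blast
  have e: "u2 = fpow f (k2 - k1) u1" using k fpow_add[OF s] by simp
  then have "u2 \<in> J (k2 - k1 + j)" using J_shift u by metis
  then have "k2 - k1 + j = j" using J_eq u by blast
  then have "k2 = k1" by simp
  then show ?thesis using k by simp
qed

lemma gap_in_J: "t \<in> S1 - G \<Longrightarrow> \<exists>j. t \<in> J j"
  using gaps by blast

lemma gap_orbit: assumes "t \<in> S1 - G" shows "orbit f t \<subseteq> S1 - G"
proof
  fix y assume "y \<in> orbit f t"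
  then obtain k where k: "y = fpow f k t" using orbit_mem by blast
  obtain j where "t \<in> J j" using gap_in_J assms by blast
  then have "y \<in> J (k+j)" using J_shift k by blast
  then show "y \<in> S1 - G" using J_sub by blast
qed

lemma G_orbit: assumes "x \<in> G" shows "orbit f x \<subseteq> G"
proof
  fix y assume y: "y \<in> orbit f x"
  have xS: "x \<in> S1" using assms GS by blast
  show "y \<in> G"
  proof (rule ccontr)
    assume "y \<notin> G"
    then have "y \<in> S1 - G" using y orbit_S1 xS by blast
    moreover have "x \<in> orbit f y" using orbit_eq[OF xS y] orbit_self by blast
    ultimately show False using gap_orbit assms by blast
  qed
qed

lemma J0_in_orbit: assumes "t \<in> S1 - G" shows "\<exists>u\<in>J0. u \<in> orbit f t"
proof -
  obtain j where "t \<in> J j" using gap_in_J assms by blast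
  then have "fpow f (-j) t \<in> J (-j + j)" by (rule J_shift)
  then have "fpow f (-j) t \<in> J0" using J_0 by simp
  moreover have "fpow f (-j) t \<in> orbit f t" using orbit_mem by blast
  ultimately show ?thesis by blast
qed

lemma J0_orbit_inj: assumes "u \<in> J0" "v \<in> J0" "orbit f u = orbit f v" shows "u = v"
proof -
  have "u \<in> S1" using assms J0_S1 by blast
  moreover have "v \<in> orbit f u" using assms orbit_self by metis
  moreover have "u \<in> J 0" "v \<in> J 0" using assms J_0 by auto
  ultimately show ?thesis using at_most_one[of u u v 0] orbit_self by blast
qed

lemma orbit_inf: assumes "t \<in> S1 - G" shows "infinite (orbit f t)"
proof
  assume fin: "finite (orbit f t)"
  obtain j where tj: "t \<in> J j" using gap_in_J assms by blast
  have "inj (\<lambda>k. fpow f k t)"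
  proof (rule injI)
    fix k1 k2 assume e: "fpow f k1 t = fpow f k2 t"
    have "fpow f k1 t \<in> J (k1 + j)" "fpow f k2 t \<in> J (k2 + j)" using J_shift tj by blast+
    then have "k1 + j = k2 + j" using e J_eq by metis
    then show "k1 = k2" by simp
  qed
  moreover have "range (\<lambda>k. fpow f k t) = orbit f t" by (auto simp: orbit_mem)
  ultimately have "finite (UNIV :: int set)" using fin finite_imageD by metis
  then show False by simp
qed

lemma circexp_S1: "circexp s \<in> S1"
  by (simp add: circexp_def)

lemma circexp_eqD: assumes "circexp s = circexp t" shows "\<exists>n::int. s = t + n"
proof -
  have "exp (\<i> * complex_of_real (2 * pi * s)) = exp (\<i> * complex_of_real (2 * pi * t))"
    using assms by (simp add: circexp_def cis_conv_exp)
  then obtain n::int where "\<i> * complex_of_real (2 * pi * s) = \<i> * complex_of_real (2 * pi * t) + (of_int (2 * n) * pi) * \<i>"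
    using exp_eq by blast
  then have "\<i> * complex_of_real (2 * pi * s) = \<i> * complex_of_real (2 * pi * t + 2 * n * pi)"
    by (simp add: algebra_simps)
  then have "complex_of_real (2 * pi * s) = complex_of_real (2 * pi * t + 2 * n * pi)"
    using mult_cancel_left[of "\<i>"] by simp
  then have "2 * pi * s = 2 * pi * t + 2 * n * pi" using of_real_eq_iff by blast
  then have "pi * (2 * s) = pi * (2 * (t + n))" by (simp add: algebra_simps)
  then have "2 * s = 2 * (t + n)" by simp
  then have "s = t + n" by simp
  then show ?thesis by blast
qed

lemma circexp_shift: "circexp (s + of_int n) = circexp s"
proof -
  have "cis (2 * pi * (s + of_int n)) = cis (2 * pi * s) * cis (2 * pi * of_int n)"
    by (simp add: cis_mult algebra_simps)
  also have "cis (2 * pi * of_int n) = 1" by (simp add: cis_multiple_2pi)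
  finally show ?thesis by (simp add: circexp_def)
qed

lemma circexp_inj: assumes "s \<in> {a<..<b}" "s' \<in> {a<..<b}" "circexp s = circexp s'" shows "s = s'"
proof -
  obtain n::int where n: "s = s' + n" using circexp_eqD assms by blast
  have "\<bar>real_of_int n\<bar> < 1" using n assms ab by auto
  then have "n = 0" by linarith
  then show ?thesis using n by simp
qed

lemma circexp_surj: assumes "z \<in> S1" shows "\<exists>s\<in>{a..<a+1}. circexp s = z"
proof -
  have z0: "z \<noteq> 0" using assms by auto
  have "sgn z = z" using assms by (simp add: sgn_eq)
  then have zc: "z = circexp (Arg z / (2*pi))" using cis_Arg[OF z0] by (simp add: circexp_def)
  define n where "n = \<lceil>a - Arg z / (2*pi)\<rceil>"
  define s where "s = Arg z / (2*pi) + of_int n"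
  have "a \<le> s" "s < a + 1" unfolding s_def n_def by linarith+
  moreover have "circexp s = z" using zc circexp_shift s_def by simp
  ultimately show ?thesis by auto
qed

lemma J0_open: "openin circ J0"
proof -
  have "continuous_on {b..a+1} circexp" unfolding circexp_def by (intro continuous_intros)
  then have "compact (circexp ` {b..a+1})" by (intro compact_continuous_image) auto
  then have cl: "closed (circexp ` {b..a+1})" by (rule compact_imp_closed)
  have "J0 = S1 \<inter> - (circexp ` {b..a+1})"
  proof
    show "J0 \<subseteq> S1 \<inter> - (circexp ` {b..a+1})"
    proof
      fix z assume "z \<in> J0"
      then obtain s where s: "s \<in> {a<..<b}" "z = circexp s" by blast
      have "z \<notin> circexp ` {b..a+1}"
      proof
        assume "z \<in> circexp ` {b..a+1}"
        then obtain s' where s': "s' \<in> {b..a+1}" "circexp s' = circexp s" using s by auto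
        then obtain n::int where "s' = s + n" using circexp_eqD by blast
        moreover have "0 < s' - s" "s' - s < 1" using s s' by auto
        ultimately show False by auto
      qed
      then show "z \<in> S1 \<inter> - (circexp ` {b..a+1})" using s circexp_S1 by auto
    qed
    show "S1 \<inter> - (circexp ` {b..a+1}) \<subseteq> J0"
    proof
      fix z assume z: "z \<in> S1 \<inter> - (circexp ` {b..a+1})"
      then obtain s where s: "s \<in> {a..<a+1}" "circexp s = z" using circexp_surj by blast
      show "z \<in> J0"
      proof (cases "s = a")
        case True
        then have "circexp (a+1) = z" using s circexp_shift[of a 1] by simp
        then show ?thesis using z ab by auto
      next
        case False
        then have "s < b" using s z ab by (cases "s < b") auto
        then show ?thesis using s False by auto
      qed
    qed
  qed
  then show ?thesis unfolding openin_open using cl by blast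
qed

lemma J_open: "openin circ (J m)"
  using fpow_open J0_open by blast


lemma openin_delete: assumes "openin circ W" shows "openin circ (W - {y})"
proof -
  obtain T where T: "open T" "W = S1 \<inter> T" using assms openin_open by blast
  then have "W - {y} = S1 \<inter> (T - {y})" by blast
  then show ?thesis using T open_delete openin_open by metis
qed

lemma closure_pick:
  assumes "x \<in> closure S" "openin circ W" "x \<in> W" "S \<subseteq> S1"
  shows "\<exists>u\<in>S. u \<in> W"
proof -
  obtain T where T: "open T" "W = S1 \<inter> T" using assms openin_open by blast
  then have "T \<inter> closure S \<noteq> {}" using assms by blast
  then have "T \<inter> S \<noteq> {}" using open_Int_closure_eq_empty T by blast
  then show ?thesis using T assms by blast
qed

lemma limpt_pick:
  assumes "x islimpt S" "openin circ W" "x \<in> W" "S \<subseteq> S1"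
  shows "\<exists>u\<in>S. u \<in> W \<and> u \<noteq> x"
proof -
  obtain T where T: "open T" "W = S1 \<inter> T" using assms openin_open by blast
  then obtain y where "y \<in> S" "y \<in> T" "y \<noteq> x" using assms islimptE by blast
  then show ?thesis using T assms by blast
qed

lemma gap_limpt: assumes t: "t \<in> S1 - G" shows "\<exists>w\<in>G. w islimpt orbit f t"
proof -
  have tS: "t \<in> S1" using t by blast
  have "compact S1" by simp
  then obtain w where w: "w \<in> S1" "w islimpt orbit f t"
    using compact_eq_Bolzano_Weierstrass orbit_inf[OF t] orbit_S1[OF tS] by blast
  have "w \<in> G"
  proof (rule ccontr)
    assume "w \<notin> G"
    then obtain j where wj: "w \<in> J j" using gap_in_J w by blast
    obtain y1 where y1: "y1 \<in> orbit f t" "y1 \<in> J j" "y1 \<noteq> w"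
      using limpt_pick[OF w(2) J_open wj orbit_S1[OF tS]] by blast
    have o: "openin circ (J j - {y1})" using J_open openin_delete by blast
    have wj': "w \<in> J j - {y1}" using wj y1 by blast
    obtain y2 where y2: "y2 \<in> orbit f t" "y2 \<in> J j - {y1}"
      using limpt_pick[OF w(2) o wj' orbit_S1[OF tS]] by blast
    then show False using at_most_one[OF tS y1(1) y2(1) y1(2)] by blast
  qed
  then show ?thesis using w by blast
qed

lemma sat_open_full:
  assumes V: "openin circ V" and sat: "\<And>s. s \<in> V \<Longrightarrow> orbit f s \<subseteq> V"
    and z: "z \<in> G" "z \<in> V"
  shows "S1 \<subseteq> V"
proof -
  have GV: "t \<in> V" if t: "t \<in> G" for t
  proof -
    have tS: "t \<in> S1" using t GS by blast
    have "z \<in> closure (orbit f t)" using Gdense z t by blast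
    then obtain u where u: "u \<in> orbit f t" "u \<in> V"
      using closure_pick[OF _ V z(2) orbit_S1[OF tS]] by blast
    then have "t \<in> orbit f u" using orbit_eq[OF tS u(1)] orbit_self by blast
    then show ?thesis using sat u by blast
  qed
  show ?thesis
  proof
    fix t assume tS: "t \<in> S1"
    show "t \<in> V"
    proof (cases "t \<in> G")
      case True
      then show ?thesis using GV by blast
    next
      case False
      then obtain w where w: "w \<in> G" "w islimpt orbit f t" using gap_limpt tS by blast
      then obtain u where u: "u \<in> orbit f t" "u \<in> V"
        using limpt_pick[OF w(2) V GV[OF w(1)] orbit_S1[OF tS]] by blast
      then have "t \<in> orbit f u" using orbit_eq[OF tS u(1)] orbit_self by blast
      then show ?thesis using sat u by blast
    qed
  qed
qed

end



lemma quot_open: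
  "openin (quotient_top X q) U \<longleftrightarrow> U \<subseteq> q ` topspace X \<and> openin X {x \<in> topspace X. q x \<in> U}"
proof -
  have "istopology (\<lambda>U. U \<subseteq> q ` topspace X \<and> openin X {x \<in> topspace X. q x \<in> U})"
    unfolding istopology_def
  proof (rule conjI; intro allI impI)
    fix S T
    assume S: "S \<subseteq> q ` topspace X \<and> openin X {x \<in> topspace X. q x \<in> S}"
       and T: "T \<subseteq> q ` topspace X \<and> openin X {x \<in> topspace X. q x \<in> T}"
    have "{x \<in> topspace X. q x \<in> S \<inter> T} = {x \<in> topspace X. q x \<in> S} \<inter> {x \<in> topspace X. q x \<in> T}"
      by blast
    then show "S \<inter> T \<subseteq> q ` topspace X \<and> openin X {x \<in> topspace X. q x \<in> S \<inter> T}"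
      using S T by auto
  next
    fix K
    assume K: "\<forall>S\<in>K. S \<subseteq> q ` topspace X \<and> openin X {x \<in> topspace X. q x \<in> S}"
    have "{x \<in> topspace X. q x \<in> \<Union>K} = \<Union>((\<lambda>S. {x \<in> topspace X. q x \<in> S}) ` K)"
      by blast
    moreover have "openin X (\<Union>((\<lambda>S. {x \<in> topspace X. q x \<in> S}) ` K))"
      using K by (intro openin_Union) blast
    ultimately show "\<Union>K \<subseteq> q ` topspace X \<and> openin X {x \<in> topspace X. q x \<in> \<Union>K}"
      using K by auto
  qed
  then show ?thesis unfolding quotient_top_def by simp
qed

lemma quot_topspace: "topspace (quotient_top X q) = q ` topspace X"
proof -
  have "{x \<in> topspace X. q x \<in> q ` topspace X} = topspace X" by blast
  then have "openin (quotient_top X q) (q ` topspace X)"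
    unfolding quot_open by simp
  then have "q ` topspace X \<subseteq> topspace (quotient_top X q)" using openin_subset by blast
  moreover have "topspace (quotient_top X q) \<subseteq> q ` topspace X"
    using quot_open[of X q "topspace (quotient_top X q)"] by auto
  ultimately show ?thesis by blast
qed

lemma dense_rat_avoid:
  fixes c d x e q :: real
  assumes cd: "c < d" and x: "x \<in> {c..d}" and e: "e > 0"
  shows "\<exists>r\<in>\<rat>. r \<in> {c..d} \<and> dist r x < e \<and> r \<noteq> q"
proof -
  obtain u v where uv: "u < v" "{u<..<v} \<subseteq> {c..d}" "\<forall>r\<in>{u<..<v}. dist r x < e"
  proof (cases "x < d")
    case True
    show ?thesis
      by (rule that[of x "min (x+e) d"]) (use True x e in \<open>auto simp: dist_real_def\<close>)
  next
    case False
    then have "x = d" using x by auto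
    show ?thesis
      by (rule that[of "max (x-e) c" x]) (use \<open>x = d\<close> cd e in \<open>auto simp: dist_real_def\<close>)
  qed
  obtain u' v' where uv': "u' < v'" "{u'<..<v'} \<subseteq> {u<..<v}" "q \<notin> {u'<..<v'}"
  proof (cases "q \<in> {u<..<v}")
    case True
    show ?thesis by (rule that[of u q]) (use True in auto)
  next
    case False
    show ?thesis by (rule that[of u v]) (use False uv in auto)
  qed
  obtain r where r: "r \<in> \<rat>" "u' < r" "r < v'" using Rats_dense_in_real[OF uv'(1)] by blast
  then have "r \<in> {u'<..<v'}" by simp
  then show ?thesis using r uv uv' by blast
qed

context denj begin

lemma End_cont: "h \<in> End_part circ D \<Longrightarrow> continuous_map circ circ h"
  unfolding End_part_def by blast

lemma End_S1: assumes "h \<in> End_part circ D" "s \<in> S1" shows "h s \<in> S1"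
proof -
  have "h ` topspace circ \<subseteq> topspace circ"
    using End_cont[OF assms(1)] continuous_map_image_subset_topspace by blast
  then have "h ` S1 \<subseteq> S1" by (simp only: topS1)
  then show ?thesis by (rule subsetD[OF _ imageI[OF assms(2)]])
qed

lemma memC: "s \<in> S1 \<Longrightarrow> h s \<in> W \<Longrightarrow> s \<in> {s \<in> S1. h s \<in> W}"
  by (rule CollectI, rule conjI)

lemma Delta:
  assumes h: "h \<in> End_part circ (orbits f)" and x: "x \<in> S1" and u: "u \<in> orbit f x"
  shows "h u \<in> orbit f (h x)"
proof -
  have "orbit f x \<in> orbits f" using x by (simp add: orbits_def)
  then obtain B where B: "B \<in> orbits f" "h ` orbit f x \<subseteq> B" using h unfolding End_part_def by blast
  then obtain s where s: "s \<in> S1" "B = orbit f s" by (auto simp: orbits_def)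
  have "h x \<in> orbit f s" using B s orbit_self by blast
  then have "orbit f (h x) = orbit f s" using orbit_eq s by blast
  then show ?thesis using B s u by blast
qed

lemma L5:
  assumes h: "h \<in> End_part circ (orbits f)" and x0: "x0 \<in> G" and y: "h x0 \<notin> G"
    and s: "s \<in> S1"
  shows "h s \<in> orbit f (h x0)"
proof -
  define y where "y = h x0"
  have x0S: "x0 \<in> S1" using x0 GS by blast
  have yS: "y \<in> S1" using End_S1[OF h x0S] y_def by simp
  have yg: "y \<in> S1 - G" using yS y y_def by blast
  obtain k where yk: "y \<in> J k" using gap_in_J yg by blast
  have hc: "continuous_map circ circ h" using End_cont h by blast
  have pre: "openin circ {s \<in> S1. h s \<in> W}" if "openin circ W" for W
    using openin_continuous_map_preimage[OF hc that] by simp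
  have step1: "h x = y" if x: "x \<in> G" "h x \<in> J k" for x
  proof (rule ccontr)
    assume ne: "h x \<noteq> y"
    have o: "openin circ {s \<in> S1. h s \<in> J k - {y}}" using pre J_open openin_delete by blast
    have xin: "x \<in> {s \<in> S1. h s \<in> J k - {y}}" using x ne GS memC by blast
    have "x \<in> closure (orbit f x0)" using Gdense x0 x by blast
    then obtain u where u: "u \<in> orbit f x0" "h u \<in> J k - {y}"
      using closure_pick[OF _ o xin orbit_S1[OF x0S]] by blast
    have "h u \<in> orbit f y" using Delta[OF h x0S u(1)] y_def by simp
    then have "h u = y" using at_most_one[OF yS _ orbit_self _ yk] u by blast
    then show False using u by blast
  qed
  have step2: "h x \<in> orbit f y" if x: "x \<in> G" for x
  proof -
    have xS: "x \<in> S1" using x GS by blast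
    have o: "openin circ {s \<in> S1. h s \<in> J k}" using pre J_open by blast
    have x0in: "x0 \<in> {s \<in> S1. h s \<in> J k}" using memC[OF x0S] yk unfolding y_def by blast
    have "x0 \<in> closure (orbit f x)" using Gdense x0 x by blast
    then obtain u where u: "u \<in> orbit f x" "h u \<in> J k"
      using closure_pick[OF _ o x0in orbit_S1[OF xS]] by blast
    have "u \<in> G" using G_orbit x u by blast
    then have "h u = y" using step1 u by blast
    moreover have "h u \<in> orbit f (h x)" using Delta[OF h xS u(1)] .
    ultimately have "y \<in> orbit f (h x)" by simp
    then have "orbit f y = orbit f (h x)" using orbit_eq End_S1[OF h xS] by blast
    then show ?thesis using orbit_self by blast
  qed
  show ?thesis
  proof (cases "s \<in> G")
    case True
    then show ?thesis using step2 y_def by simp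
  next
    case False
    then have sg: "s \<in> S1 - G" using s by blast
    obtain w where w: "w \<in> G" "w islimpt orbit f s" using gap_limpt sg by blast
    have wS: "w \<in> S1" using w GS by blast
    have hw: "h w \<in> orbit f y" using step2 w by blast
    have "h w \<in> S1 - G" using gap_orbit[OF yg] hw by blast
    then obtain j where hj: "h w \<in> J j" using gap_in_J by blast
    have o2: "openin circ {s \<in> S1. h s \<in> J j}" using pre J_open by blast
    have win: "w \<in> {s \<in> S1. h s \<in> J j}" using memC[OF wS] hj by blast
    obtain u where u: "u \<in> orbit f s" "h u \<in> J j"
      using limpt_pick[OF w(2) o2 win orbit_S1[OF s]] by blast
    have hsS: "h s \<in> S1" using End_S1[OF h s] .
    have qo: "h u \<in> orbit f (h s)" using Delta[OF h s u(1)] .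
    have "h w = h u"
    proof (rule ccontr)
      assume ne: "h w \<noteq> h u"
      have o3: "openin circ {s \<in> S1. h s \<in> J j - {h u}}" using pre J_open openin_delete by blast
      have win3: "w \<in> {s \<in> S1. h s \<in> J j - {h u}}" using memC[OF wS, of h] hj ne by blast
      obtain u' where u': "u' \<in> orbit f s" "h u' \<in> J j - {h u}"
        using limpt_pick[OF w(2) o3 win3 orbit_S1[OF s]] by blast
      have "h u' \<in> orbit f (h s)" using Delta[OF h s u'(1)] .
      then have "h u' = h u" using at_most_one[OF hsS _ qo _ u(2)] u' by blast
      then show False using u' by blast
    qed
    then have "h w \<in> orbit f (h s)" using qo by simp
    then have "orbit f (h w) = orbit f (h s)" using orbit_eq hsS by blast
    moreover have "orbit f (h w) = orbit f y" using orbit_eq[OF yS hw] .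
    ultimately show ?thesis using orbit_self y_def by blast
  qed
qed

abbreviation "Y \<equiv> quotient_top circ (orbit f)"

lemma topY: "topspace Y = p ` S1"
  using quot_topspace[of circ p] by simp

lemma openY: "openin Y U \<longleftrightarrow> U \<subseteq> p ` S1 \<and> openin circ {x \<in> S1. p x \<in> U}"
  using quot_open[of circ p U] by simp

lemma wd:
  assumes h: "h \<in> End_part circ (orbits f)" and x: "x \<in> S1" "x' \<in> S1" "p x = p x'"
  shows "p (h x) = p (h x')"
proof -
  have "x' \<in> orbit f x" using x orbit_eq_iff by blast
  then have "h x' \<in> orbit f (h x)" using Delta[OF h x(1)] by blast
  then show ?thesis using orbit_eq End_S1[OF h x(1)] by metis
qed

lemma psi_eq:
  assumes h: "h \<in> End_part circ (orbits f)"
  shows "psi circ Y p h = (\<lambda>B. if B \<in> p ` S1 then p (h (SOME x. x \<in> S1 \<and> p x = B)) else undefined)"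
    (is "_ = ?g0")
proof -
  have P: "?g0 \<in> extensional (topspace Y) \<and> (\<forall>x\<in>topspace circ. p (h x) = ?g0 (p x))"
  proof (intro conjI ballI)
    show "?g0 \<in> extensional (topspace Y)" unfolding topY extensional_def by auto
  next
    fix x assume "x \<in> topspace circ"
    then have x: "x \<in> S1" by simp
    then have ex: "\<exists>x'. x' \<in> S1 \<and> p x' = p x" by blast
    define x' where "x' = (SOME x'. x' \<in> S1 \<and> p x' = p x)"
    have x': "x' \<in> S1" "p x' = p x" using someI_ex[OF ex] unfolding x'_def by blast+
    have "?g0 (p x) = p (h x')" using imageI[of x S1 p] x by (simp only: if_P x'_def)
    then show "p (h x) = ?g0 (p x)" using wd[OF h x x'(1) x'(2)[symmetric]] by simp
  qed
  have U: "g = ?g0" if "g \<in> extensional (topspace Y) \<and> (\<forall>x\<in>topspace circ. p (h x) = g (p x))" for g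
  proof
    fix B show "g B = ?g0 B"
    proof (cases "B \<in> p ` S1")
      case True
      then obtain x where x: "x \<in> S1" "B = p x" by blast
      then show ?thesis using that P by simp
    next
      case False
      then show ?thesis using that unfolding topY extensional_def by simp
    qed
  qed
  show ?thesis unfolding psi_def using P U by (rule the_equality)
qed

lemma psi_app:
  assumes h: "h \<in> End_part circ (orbits f)" and x: "x \<in> S1"
  shows "psi circ Y p h (p x) = p (h x)"
proof -
  have ex: "\<exists>x'. x' \<in> S1 \<and> p x' = p x" using x by blast
  define x' where "x' = (SOME x'. x' \<in> S1 \<and> p x' = p x)"
  have x': "x' \<in> S1" "p x' = p x" using someI_ex[OF ex] unfolding x'_def by blast+
  have "psi circ Y p h (p x) = p (h x')" unfolding psi_eq[OF h]
    using imageI[of x S1 p] x by (simp only: if_P x'_def)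
  then show ?thesis using wd[OF h x x'(1) x'(2)[symmetric]] by simp
qed

lemma psi_End:
  assumes h: "h \<in> End_part circ (orbits f)"
  shows "psi circ Y p h \<in> End_top Y"
proof -
  let ?g = "psi circ Y p h"
  have ext: "?g \<in> extensional (topspace Y)" unfolding psi_eq[OF h] topY extensional_def by auto
  have maps: "?g \<in> topspace Y \<rightarrow> topspace Y"
  proof
    fix B assume "B \<in> topspace Y"
    then obtain x where x: "x \<in> S1" "B = p x" using topY by auto
    then show "?g B \<in> topspace Y" using psi_app[OF h x(1)] End_S1[OF h x(1)] topY by simp
  qed
  have "openin Y {B \<in> topspace Y. ?g B \<in> U}" if U: "openin Y U" for U
  proof -
    have V: "openin circ {z \<in> S1. p z \<in> U}" using U openY by blast
    have "openin circ {x \<in> topspace circ. h x \<in> {z \<in> S1. p z \<in> U}}"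
      using openin_continuous_map_preimage[OF End_cont[OF h] V] .
    moreover have "{x \<in> topspace circ. h x \<in> {z \<in> S1. p z \<in> U}} = {x \<in> S1. p x \<in> {B \<in> topspace Y. ?g B \<in> U}}"
      using psi_app[OF h] End_S1[OF h] topY by auto
    ultimately show ?thesis unfolding openY topY by auto
  qed
  then have "continuous_map Y Y ?g" using maps unfolding continuous_map_def by blast
  then show ?thesis using ext unfolding End_top_def by blast
qed

lemma sat_pre: assumes W: "W \<subseteq> S1" shows "{x \<in> S1. p x \<in> p ` W} = (\<Union>k. fpow f k ` W)"
proof
  show "{x \<in> S1. p x \<in> p ` W} \<subseteq> (\<Union>k. fpow f k ` W)"
  proof
    fix x assume "x \<in> {x \<in> S1. p x \<in> p ` W}"
    then obtain w where w: "x \<in> S1" "w \<in> W" "p x = p w" by blast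
    then have "x \<in> orbit f w" using orbit_eq_iff[of w x] W by blast
    then obtain k where "x = fpow f k w" using orbit_mem by blast
    then show "x \<in> (\<Union>k. fpow f k ` W)" using w by blast
  qed
  show "(\<Union>k. fpow f k ` W) \<subseteq> {x \<in> S1. p x \<in> p ` W}"
  proof
    fix x assume "x \<in> (\<Union>k. fpow f k ` W)"
    then obtain k w where kw: "w \<in> W" "x = fpow f k w" by blast
    then have wS: "w \<in> S1" using W by blast
    have xo: "x \<in> orbit f w" using kw orbit_mem by blast
    then have "p x = p w" using orbit_eq[OF wS] by blast
    moreover have "x \<in> S1" using orbit_S1[OF wS] xo by blast
    ultimately show "x \<in> {x \<in> S1. p x \<in> p ` W}" using kw by blast
  qed
qed

lemma sat_open: assumes W: "openin circ W" shows "openin Y (p ` (W \<inter> J0))"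
proof -
  have WJ: "W \<inter> J0 \<subseteq> S1" using J0_S1 by blast
  have "openin circ (W \<inter> J0)" using W J0_open by blast
  then have "openin circ (\<Union>k. fpow f k ` (W \<inter> J0))" using fpow_open by blast
  then have "openin circ {x \<in> S1. p x \<in> p ` (W \<inter> J0)}" using sat_pre[OF WJ] by simp
  moreover have "p ` (W \<inter> J0) \<subseteq> p ` S1" using WJ by blast
  ultimately show ?thesis unfolding openY by blast
qed

lemma compA:
  assumes L: "compactin Y L" and nog: "\<forall>x\<in>G. p x \<notin> L"
  shows "\<exists>K. compact K \<and> K \<subseteq> S1 \<and> p ` K = L"
proof -
  define K where "K = {u \<in> J0. p u \<in> L}"
  have Lsub: "L \<subseteq> p ` S1" using compactin_subset_topspace[OF L] topY by simp
  have pK: "p ` K = L"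
  proof
    show "p ` K \<subseteq> L" unfolding K_def by blast
    show "L \<subseteq> p ` K"
    proof
      fix l assume l: "l \<in> L"
      then obtain t where t: "t \<in> S1" "l = p t" using Lsub by blast
      then have "t \<notin> G" using nog l by blast
      then obtain u where u: "u \<in> J0" "u \<in> orbit f t" using J0_in_orbit t by blast
      then have put: "p u = p t" using orbit_eq t by blast
      have uK: "u \<in> K" unfolding K_def using u(1) l t put by simp
      show "l \<in> p ` K" by (rule rev_image_eqI[OF uK]) (simp add: t put)
    qed
  qed
  have KS: "K \<subseteq> S1" unfolding K_def using J0_S1 by blast
  have "compactin circ K"
    unfolding compactin_def
  proof (intro conjI allI impI)
    show "K \<subseteq> topspace circ" using KS by simp
  next
    fix \<U> assume U: "(\<forall>U\<in>\<U>. openin circ U) \<and> K \<subseteq> \<Union>\<U>"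
    let ?sat = "\<lambda>W. p ` (W \<inter> J0)"
    have "\<forall>V\<in>?sat ` \<U>. openin Y V" using U sat_open by blast
    moreover have "L \<subseteq> \<Union>(?sat ` \<U>)"
    proof
      fix l assume "l \<in> L"
      then obtain u where u: "u \<in> K" "l = p u" using pK by blast
      then obtain W where "W \<in> \<U>" "u \<in> W" using U by blast
      then show "l \<in> \<Union>(?sat ` \<U>)" using u unfolding K_def by blast
    qed
    ultimately obtain F where F: "finite F" "F \<subseteq> ?sat ` \<U>" "L \<subseteq> \<Union>F"
      using L unfolding compactin_def by meson
    then obtain \<U>' where U': "\<U>' \<subseteq> \<U>" "finite \<U>'" "F = ?sat ` \<U>'"
      using finite_subset_image by metis
    have "K \<subseteq> \<Union>\<U>'"
    proof
      fix u assume u: "u \<in> K"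
      then have "p u \<in> \<Union>F" using F unfolding K_def by blast
      then obtain W u' where W: "W \<in> \<U>'" "u' \<in> W" "u' \<in> J0" "p u = p u'" using U' by blast
      have "u \<in> J0" using u unfolding K_def by blast
      then have "u = u'" using J0_orbit_inj W by blast
      then show "u \<in> \<Union>\<U>'" using W by blast
    qed
    then show "\<exists>\<F>. finite \<F> \<and> \<F> \<subseteq> \<U> \<and> K \<subseteq> \<Union>\<F>" using U' by blast
  qed
  then have "compact K" by (simp add: compactin_subtopology)
  then show ?thesis using KS pK by blast
qed

abbreviation "E \<equiv> End_part circ (orbits f)"

lemma nbhd:
  assumes h0: "h0 \<in> E" and L: "compactin Y L" and UU: "openin Y UU"
    and sub: "psi circ Y p h0 ` L \<subseteq> UU"
  shows "\<exists>K. compactin circ K \<and> h0 ` K \<subseteq> {z \<in> S1. p z \<in> UU} \<and>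
             (\<forall>h\<in>E. h ` K \<subseteq> {z \<in> S1. p z \<in> UU} \<longrightarrow> psi circ Y p h ` L \<subseteq> UU)"
proof -
  let ?V = "{z \<in> S1. p z \<in> UU}"
  have Lsub: "L \<subseteq> p ` S1" using compactin_subset_topspace[OF L] topY by simp
  have Vo: "openin circ ?V" using UU openY by blast
  have Vsat: "orbit f s \<subseteq> ?V" if "s \<in> ?V" for s
  proof
    fix s' assume s': "s' \<in> orbit f s"
    have sS: "s \<in> S1" using that by blast
    have "orbit f s' = orbit f s" using orbit_eq[OF sS s'] .
    moreover have "s' \<in> S1" using orbit_S1[OF sS] s' by blast
    ultimately show "s' \<in> ?V" using that by simp
  qed
  show ?thesis
  proof (cases "\<exists>x\<in>G. p x \<in> L")
    case False
    then obtain K where K: "compact K" "K \<subseteq> S1" "p ` K = L" using compA[OF L] by blast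
    have cK: "compactin circ K" using K by (simp add: compactin_subtopology)
    have "h0 ` K \<subseteq> ?V"
    proof
      fix y assume "y \<in> h0 ` K"
      then obtain k where k: "k \<in> K" "y = h0 k" by blast
      then have kS: "k \<in> S1" using K by blast
      have "p (h0 k) \<in> UU" using psi_app[OF h0 kS] sub K k by blast
      then show "y \<in> ?V" using End_S1[OF h0 kS] k by simp
    qed
    moreover have "psi circ Y p h ` L \<subseteq> UU" if h: "h \<in> E" "h ` K \<subseteq> ?V" for h
    proof
      fix y assume "y \<in> psi circ Y p h ` L"
      then obtain k where k: "k \<in> K" "y = psi circ Y p h (p k)" using K by blast
      then have kS: "k \<in> S1" using K by blast
      have "h k \<in> ?V" using h k by blast
      then show "y \<in> UU" using psi_app[OF h(1) kS] k by simp
    qed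
    ultimately show ?thesis using cK by blast
  next
    case True
    then obtain x where x: "x \<in> G" "p x \<in> L" by blast
    have xS: "x \<in> S1" using x GS by blast
    have pz: "p (h0 x) \<in> UU" using psi_app[OF h0 xS] sub x by blast
    have zS: "h0 x \<in> S1" using End_S1[OF h0 xS] .
    show ?thesis
    proof (cases "h0 x \<in> G")
      case True
      have "S1 \<subseteq> ?V" using sat_open_full[OF Vo Vsat True] pz zS by blast
      then have "psi circ Y p h ` L \<subseteq> UU" if h: "h \<in> E" for h
      proof -
        have "psi circ Y p h y \<in> UU" if y: "y \<in> L" for y
        proof -
          obtain s where s: "s \<in> S1" "y = p s" using y Lsub by blast
          have "h s \<in> ?V" using End_S1[OF h s(1)] \<open>S1 \<subseteq> ?V\<close> by blast
          then show ?thesis using psi_app[OF h s(1)] s by simp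
        qed
        then show ?thesis by blast
      qed
      moreover have "compactin circ {}" by simp
      ultimately show ?thesis by blast
    next
      case False
      have cS: "compactin circ S1" by (simp add: compactin_subtopology)
      have "h0 ` S1 \<subseteq> ?V"
      proof
        fix y assume "y \<in> h0 ` S1"
        then obtain s where s: "s \<in> S1" "y = h0 s" by blast
        have "h0 s \<in> orbit f (h0 x)" using L5[OF h0 x(1) False s(1)] .
        then have "h0 s \<in> ?V" using Vsat[of "h0 x"] pz zS by blast
        then show "y \<in> ?V" using s by simp
      qed
      moreover have "psi circ Y p h ` L \<subseteq> UU" if h: "h \<in> E" "h ` S1 \<subseteq> ?V" for h
      proof -
        have "psi circ Y p h y \<in> UU" if y: "y \<in> L" for y
        proof -
          obtain s where s: "s \<in> S1" "y = p s" using y Lsub by blast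
          have "h s \<in> ?V" using h s(1) by blast
          then show ?thesis using psi_app[OF h(1) s(1)] s by simp
        qed
        then show ?thesis by blast
      qed
      ultimately show ?thesis using cS by blast
    qed
  qed
qed

lemma CONT: "has_CONT circ (orbits f) Y p"
  unfolding has_CONT_def compact_open_def
proof (rule continuous_on_generated_topo)
  let ?SX = "{{g \<in> E. g ` K \<subseteq> U} |K U. compactin circ K \<and> openin circ U}"
  let ?SY = "{{g \<in> End_top Y. g ` K \<subseteq> U} |K U. compactin Y K \<and> openin Y U}"
  have tX: "topspace (topology_generated_by ?SX) = E"
  proof -
    have "E \<in> ?SX"
    proof -
      have "E = {g \<in> E. g ` {} \<subseteq> S1}" by blast
      moreover have "compactin circ {}" "openin circ S1" using openin_topspace[of circ] by auto
      ultimately show ?thesis by blast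
    qed
    then have "\<Union>?SX = E" by blast
    then show ?thesis by simp
  qed
  have EY: "End_top Y \<in> ?SY"
  proof -
    have "End_top Y = {g \<in> End_top Y. g ` {} \<subseteq> topspace Y}" by blast
    moreover have "compactin Y {}" "openin Y (topspace Y)" by auto
    ultimately show ?thesis by blast
  qed
  show "psi circ Y p ` topspace (topology_generated_by ?SX) \<subseteq> \<Union> ?SY"
    unfolding tX using psi_End EY by blast
  fix W assume "W \<in> ?SY"
  then obtain L UU where W: "W = {g \<in> End_top Y. g ` L \<subseteq> UU}" "compactin Y L" "openin Y UU"
    by blast
  show "openin (topology_generated_by ?SX) (psi circ Y p -` W \<inter> topspace (topology_generated_by ?SX))"
    unfolding tX
  proof (subst openin_subopen, intro ballI)
    fix h0 assume h0: "h0 \<in> psi circ Y p -` W \<inter> E"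
    then have h0E: "h0 \<in> E" and sub: "psi circ Y p h0 ` L \<subseteq> UU" using W by auto
    obtain K where K: "compactin circ K" "h0 ` K \<subseteq> {z \<in> S1. p z \<in> UU}"
      "\<forall>h\<in>E. h ` K \<subseteq> {z \<in> S1. p z \<in> UU} \<longrightarrow> psi circ Y p h ` L \<subseteq> UU"
      using nbhd[OF h0E W(2) W(3) sub] by blast
    let ?T = "{h \<in> E. h ` K \<subseteq> {z \<in> S1. p z \<in> UU}}"
    have "openin circ {z \<in> S1. p z \<in> UU}" using W(3) openY by blast
    then have "?T \<in> ?SX" using K(1) by blast
    then have "openin (topology_generated_by ?SX) ?T" by (rule topology_generated_by_Basis)
    moreover have "h0 \<in> ?T" using h0E K(2) by blast
    moreover have "?T \<subseteq> psi circ Y p -` W \<inter> E" using K(3) psi_End W(1) by blast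
    ultimately show "\<exists>T. openin (topology_generated_by ?SX) T \<and> h0 \<in> T \<and> T \<subseteq> psi circ Y p -` W \<inter> E"
      by blast
  qed
qed

lemma open_G: assumes U: "openin Y U" and x: "x \<in> G" "p x \<in> U" shows "p ` S1 \<subseteq> U"
proof -
  let ?V = "{z \<in> S1. p z \<in> U}"
  have Vo: "openin circ ?V" using U openY by blast
  have Vsat: "orbit f s \<subseteq> ?V" if "s \<in> ?V" for s
  proof
    fix s' assume s': "s' \<in> orbit f s"
    have sS: "s \<in> S1" using that by blast
    have "orbit f s' = orbit f s" using orbit_eq[OF sS s'] .
    moreover have "s' \<in> S1" using orbit_S1[OF sS] s' by blast
    ultimately show "s' \<in> ?V" using that by simp
  qed
  have "x \<in> ?V" using x GS by blast
  then have "S1 \<subseteq> ?V" using sat_open_full[OF Vo Vsat x(1)] by blast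
  then show ?thesis by blast
qed

lemma notCOMP: "\<not> has_COMP circ Y p"
proof
  assume comp: "has_COMP circ Y p"
  obtain x0 where x0: "x0 \<in> G" using Gne by blast
  have x0S: "x0 \<in> S1" using x0 GS by blast
  define A' where "A' = {a<..<b} - \<rat>"
  define L where "L = p ` (circexp ` A' \<union> {x0})"
  have AJ: "circexp ` A' \<subseteq> J0" unfolding A'_def by blast
  have Lsub: "L \<subseteq> p ` S1" unfolding L_def using AJ J0_S1 x0S by blast
  have "compactin Y L"
    unfolding compactin_def
  proof (intro conjI allI impI)
    show "L \<subseteq> topspace Y" using Lsub topY by simp
  next
    fix \<U> assume U: "(\<forall>U\<in>\<U>. openin Y U) \<and> L \<subseteq> \<Union>\<U>"
    have "p x0 \<in> L" unfolding L_def by blast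
    then obtain U0 where U0: "U0 \<in> \<U>" "p x0 \<in> U0" using U by blast
    then have "p ` S1 \<subseteq> U0" using open_G U x0 by blast
    with Lsub have "L \<subseteq> U0" by (rule subset_trans)
    then have "L \<subseteq> \<Union>{U0}" by simp
    then show "\<exists>\<F>. finite \<F> \<and> \<F> \<subseteq> \<U> \<and> L \<subseteq> \<Union>\<F>" using U0
      by (intro exI[of _ "{U0}"]) blast
  qed
  then obtain K where K: "compactin circ K" "p ` K = L" using comp unfolding has_COMP_def by blast
  have Kc: "compact K" "K \<subseteq> S1" using K(1) by (simp_all add: compactin_subtopology)
  then have Kcl: "closed K" using compact_imp_closed by blast
  define c where "c = a + (b - a) / 3"
  define d where "d = a + 2 * (b - a) / 3"
  have cd: "a < c" "c < d" "d < b" unfolding c_def d_def using ab by (auto simp: field_simps)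
  have cdsub: "{c..d} \<subseteq> {a<..<b}" using cd by auto
  define C where "C m = {c..d} \<inter> (\<lambda>s. fpow f m (circexp s)) -` K" for m
  have Ccl: "closedin (top_of_set {c..d}) (C m)" for m
  proof -
    have "continuous_on UNIV circexp" unfolding circexp_def by (intro continuous_intros)
    moreover have "continuous_on S1 (fpow f m)"
      using fpow_cont[of m] by (simp add: continuous_map_in_subtopology)
    ultimately have "continuous_on {c..d} (\<lambda>s. fpow f m (circexp s))"
      using circexp_S1 by (intro continuous_on_compose2[of S1 "fpow f m" _ circexp])
        (auto intro: continuous_on_subset)
    then show ?thesis unfolding C_def using continuous_closedin_preimage Kcl by blast
  qed
  have F1: "\<exists>m. s \<in> C m" if s: "s \<in> {c..d}" "s \<notin> \<rat>" for s
  proof -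
    have "s \<in> A'" using s cdsub unfolding A'_def by blast
    then have "p (circexp s) \<in> L" unfolding L_def by blast
    then obtain k where k: "k \<in> K" "p k = p (circexp s)" using K(2) by (metis imageE)
    have "k \<in> orbit f (circexp s)" using orbit_eq_iff[of "circexp s" k] circexp_S1 Kc k by blast
    then obtain m where "k = fpow f m (circexp s)" using orbit_mem by blast
    then show ?thesis unfolding C_def using s k by blast
  qed
  have F2: "s \<notin> C m" if s: "s \<in> {c..d}" "s \<in> \<rat>" for s m
  proof
    assume "s \<in> C m"
    then have kK: "fpow f m (circexp s) \<in> K" unfolding C_def by blast
    have ko: "fpow f m (circexp s) \<in> orbit f (circexp s)" using orbit_mem by blast
    then have pk: "p (fpow f m (circexp s)) = p (circexp s)" using orbit_eq circexp_S1 by blast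
    have "p (circexp s) \<in> L" using pk kK K(2) by (metis imageI)
    then obtain y where y: "y \<in> circexp ` A' \<union> {x0}" "p (circexp s) = p y" unfolding L_def by blast
    have sJ: "circexp s \<in> J0" using s cdsub by blast
    show False
    proof (cases "y = x0")
      case True
      then have "circexp s \<in> orbit f x0" using y orbit_eq_iff[of x0 "circexp s"] x0S circexp_S1 by metis
      then have "circexp s \<in> G" using G_orbit x0 by blast
      then show False using sJ J_sub[of 0] J_0 by blast
    next
      case False
      then obtain s' where s': "s' \<in> A'" "y = circexp s'" using y by blast
      have "circexp s' \<in> J0" using s' AJ by blast
      then have "circexp s = circexp s'" using J0_orbit_inj[OF sJ] y(2) s'(2) by simp
      moreover have "s \<in> {a<..<b}" "s' \<in> {a<..<b}" using s' cdsub s unfolding A'_def by auto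
      ultimately have "s = s'" using circexp_inj by blast
      then show False using s s' unfolding A'_def by blast
    qed
  qed
  define \<G> where "\<G> = range (\<lambda>m. {c..d} - C m) \<union> (\<lambda>q. {c..d} - {q}) ` \<rat>"
  have cnt: "countable \<G>" unfolding \<G>_def using countable_rat by blast
  have dense: "{c..d} \<subseteq> closure T" if T: "{c..d} \<inter> \<rat> - {q} \<subseteq> T" for T q
  proof
    fix x assume x: "x \<in> {c..d}"
    show "x \<in> closure T" unfolding closure_approachable
    proof (intro allI impI)
      fix e :: real assume "e > 0"
      then obtain r where "r \<in> \<rat>" "r \<in> {c..d}" "dist r x < e" "r \<noteq> q"
        using dense_rat_avoid[OF cd(2) x] by blast
      then show "\<exists>y\<in>T. dist y x < e" using T by blast
    qed
  qed
  have ope: "openin (top_of_set {c..d}) T \<and> {c..d} \<subseteq> closure T" if T: "T \<in> \<G>" for T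
  proof (cases "T \<in> range (\<lambda>m. {c..d} - C m)")
    case True
    then obtain m where m: "T = {c..d} - C m" by blast
    have "openin (top_of_set {c..d}) T" using Ccl[of m] m by (simp add: closedin_def)
    moreover have "{c..d} \<inter> \<rat> - {c} \<subseteq> T" using F2 m by blast
    ultimately show ?thesis using dense by blast
  next
    case False
    then obtain q where q: "q \<in> \<rat>" "T = {c..d} - {q}" using T unfolding \<G>_def by blast
    have "T = {c..d} \<inter> - {q}" using q by blast
    then have "openin (top_of_set {c..d}) T" unfolding openin_open using open_Compl closed_singleton by blast
    moreover have "{c..d} \<inter> \<rat> - {q} \<subseteq> T" using q by blast
    ultimately show ?thesis using dense by blast
  qed
  have "{c..d} \<subseteq> closure (\<Inter>\<G>)" using Baire[OF closed_atLeastAtMost cnt ope] by blast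
  moreover have "\<Inter>\<G> = {}"
  proof (rule ccontr)
    assume "\<Inter>\<G> \<noteq> {}"
    then obtain y where y: "y \<in> \<Inter>\<G>" by blast
    have "{c..d} - C 0 \<in> \<G>" unfolding \<G>_def by blast
    then have yc: "y \<in> {c..d}" using y by blast
    show False
    proof (cases "y \<in> \<rat>")
      case True
      then have "{c..d} - {y} \<in> \<G>" unfolding \<G>_def by blast
      then show False using y by blast
    next
      case False
      then obtain m where "y \<in> C m" using F1 yc by blast
      moreover have "{c..d} - C m \<in> \<G>" unfolding \<G>_def by blast
      ultimately show False using y by blast
    qed
  qed
  ultimately show False using cd by simp
qed

end

theorem mainTheorem14:
  fixes f :: "complex \<Rightarrow> complex"
  assumes "denjoy f"
  shows "has_CONT circ (orbits f) (quotient_top circ (orbit f)) (orbit f) \<and>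
         \<not> has_COMP circ (quotient_top circ (orbit f)) (orbit f)"
proof -
  have D0: "orient_pres_irrational_rot f"
    "\<exists>\<Gamma> J0. \<Gamma> \<subseteq> S1 \<and> cantor_set \<Gamma> \<and> nowhere_dense_in_circle \<Gamma> \<and> f ` \<Gamma> = \<Gamma> \<and>
        (\<forall>x\<in>\<Gamma>. \<Gamma> \<subseteq> closure (orbit f x)) \<and>
        open_arc J0 \<and>
        S1 - \<Gamma> = (\<Union>m. fpow f m ` J0) \<and>
        disjoint_family (\<lambda>m::int. fpow f m ` J0)"
    using assms unfolding denjoy_def by (rule conjunct1, rule conjunct2)
  from D0(2) obtain \<Gamma> J0 where D: "\<Gamma> \<subseteq> S1 \<and> cantor_set \<Gamma> \<and> nowhere_dense_in_circle \<Gamma> \<and> f ` \<Gamma> = \<Gamma> \<and>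
        (\<forall>x\<in>\<Gamma>. \<Gamma> \<subseteq> closure (orbit f x)) \<and>
        open_arc J0 \<and>
        S1 - \<Gamma> = (\<Union>m. fpow f m ` J0) \<and>
        disjoint_family (\<lambda>m::int. fpow f m ` J0)"
    by (elim exE) (erule that)
  note D1 = D[THEN conjunct1] D[THEN conjunct2, THEN conjunct1]
    D[THEN conjunct2, THEN conjunct2, THEN conjunct2, THEN conjunct2, THEN conjunct1]
    D[THEN conjunct2, THEN conjunct2, THEN conjunct2, THEN conjunct2, THEN conjunct2, THEN conjunct1]
    D[THEN conjunct2, THEN conjunct2, THEN conjunct2, THEN conjunct2, THEN conjunct2, THEN conjunct2, THEN conjunct1]
    D[THEN conjunct2, THEN conjunct2, THEN conjunct2, THEN conjunct2, THEN conjunct2, THEN conjunct2, THEN conjunct2]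
  obtain a b where ab: "a < b" "b \<le> a + 1" "J0 = circexp ` {a<..<b}"
    using D1(4) unfolding open_arc_def by blast
  have hom: "homeomorphic_map circ circ f"
    using D0(1) unfolding orient_pres_irrational_rot_def by (rule conjunct1)
  have cG: "compact \<Gamma>" "\<Gamma> \<noteq> {}" using D1(2) unfolding cantor_set_def by blast+
  interpret denj f \<Gamma> a b
  proof
    show "homeomorphic_map circ circ f" by (fact hom)
    show "\<Gamma> \<subseteq> S1" by (fact D1(1))
    show "compact \<Gamma>" by (fact cG(1))
    show "\<Gamma> \<noteq> {}" by (fact cG(2))
    show "\<forall>x\<in>\<Gamma>. \<Gamma> \<subseteq> closure (orbit f x)" by (fact D1(3))
    show "a < b" "b \<le> a + 1" by (fact ab(1), fact ab(2))
    show "S1 - \<Gamma> = (\<Union>m. fpow f m ` circexp ` {a<..<b})" using D1(5) ab(3) by simp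
    show "disjoint_family (\<lambda>m::int. fpow f m ` circexp ` {a<..<b})" using D1(6) ab(3) by simp
  qed
  show ?thesis using CONT notCOMP by blast
qed

end
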